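(* Let $\mathcal E$ and $\mathcal C$ be categories with finite sums and let $F:\mathcal E\to\mathcal C$ be a discrete fibration that preserves finite sums. Let $X$ be an object of $\mathcal E$ such that $FX$ is a sum of a finite family $A_i$ of objects of $\mathcal C$ (with injections $\iota_i:A_i\to FX$). Then $X$ is itself a sum of a family $X_i$ of objects of $\mathcal E$ with $FX_i=A_i$ (with injections $X_i\to X$ lying over the $\iota_i$).
   Context: A functor $F:\mathcal E\to\mathcal C$ is a discrete fibration if for every object $X$ of $\mathcal E$ and every arrow $a:A\to FX$ in $\mathcal C$ there is a unique arrow $x$ in $\mathcal E$ with codomain $X$ and $Fx=a$. *)

theory Defs
  imports Main
begin

text \<open>Categories, given explicitly by objects, arrows, domain, codomain,
identities and composition (Comp g f is g after f).\<close>

record ('o, 'a) category =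
  Obj  :: "'o set"
  Arr  :: "'a set"
  Dom  :: "'a \<Rightarrow> 'o"
  Cod  :: "'a \<Rightarrow> 'o"
  Id   :: "'o \<Rightarrow> 'a"
  Comp :: "'a \<Rightarrow> 'a \<Rightarrow> 'a"

definition hom :: "('o, 'a) category \<Rightarrow> 'o \<Rightarrow> 'o \<Rightarrow> 'a set" where
  "hom C A B = {f \<in> Arr C. Dom C f = A \<and> Cod C f = B}"

definition is_category :: "('o, 'a) category \<Rightarrow> bool" where
  "is_category C \<longleftrightarrow>
     (\<forall>f \<in> Arr C. Dom C f \<in> Obj C \<and> Cod C f \<in> Obj C) \<and>
     (\<forall>A \<in> Obj C. Id C A \<in> hom C A A) \<and>
     (\<forall>f \<in> Arr C. \<forall>g \<in> Arr C. Cod C f = Dom C g \<longrightarrow>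
         Comp C g f \<in> hom C (Dom C f) (Cod C g)) \<and>
     (\<forall>f \<in> Arr C. Comp C f (Id C (Dom C f)) = f \<and> Comp C (Id C (Cod C f)) f = f) \<and>
     (\<forall>f \<in> Arr C. \<forall>g \<in> Arr C. \<forall>h \<in> Arr C. Cod C f = Dom C g \<longrightarrow> Cod C g = Dom C h \<longrightarrow>
         Comp C h (Comp C g f) = Comp C (Comp C h g) f)"

definition is_functor ::
  "('o1, 'a1) category \<Rightarrow> ('o2, 'a2) category \<Rightarrow> ('o1 \<Rightarrow> 'o2) \<Rightarrow> ('a1 \<Rightarrow> 'a2) \<Rightarrow> bool" where
  "is_functor E C FO FA \<longleftrightarrow>
     is_category E \<and> is_category C \<and>
     (\<forall>X \<in> Obj E. FO X \<in> Obj C) \<and>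
     (\<forall>f \<in> Arr E. FA f \<in> hom C (FO (Dom E f)) (FO (Cod E f))) \<and>
     (\<forall>X \<in> Obj E. FA (Id E X) = Id C (FO X)) \<and>
     (\<forall>f \<in> Arr E. \<forall>g \<in> Arr E. Cod E f = Dom E g \<longrightarrow> FA (Comp E g f) = Comp C (FA g) (FA f))"

definition discrete_fibration ::
  "('o1, 'a1) category \<Rightarrow> ('o2, 'a2) category \<Rightarrow> ('o1 \<Rightarrow> 'o2) \<Rightarrow> ('a1 \<Rightarrow> 'a2) \<Rightarrow> bool" where
  "discrete_fibration E C FO FA \<longleftrightarrow>
     is_functor E C FO FA \<and>
     (\<forall>X \<in> Obj E. \<forall>a \<in> Arr C. Cod C a = FO X \<longrightarrow>
        (\<exists>!x. x \<in> Arr E \<and> Cod E x = X \<and> FA x = a))"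

definition is_sum ::
  "('o, 'a) category \<Rightarrow> 'i set \<Rightarrow> ('i \<Rightarrow> 'o) \<Rightarrow> 'o \<Rightarrow> ('i \<Rightarrow> 'a) \<Rightarrow> bool" where
  "is_sum C I A S \<iota> \<longleftrightarrow>
     S \<in> Obj C \<and>
     (\<forall>i \<in> I. A i \<in> Obj C \<and> \<iota> i \<in> hom C (A i) S) \<and>
     (\<forall>Y \<in> Obj C. \<forall>f. (\<forall>i \<in> I. f i \<in> hom C (A i) Y) \<longrightarrow>
        (\<exists>!u. u \<in> hom C S Y \<and> (\<forall>i \<in> I. Comp C u (\<iota> i) = f i)))"

definition has_finite_sums :: "('o, 'a) category \<Rightarrow> bool" where
  "has_finite_sums C \<longleftrightarrow>
     (\<forall>n A. (\<forall>i < n. A i \<in> Obj C) \<longrightarrow> (\<exists>S \<iota>. is_sum C {..<(n::nat)} A S \<iota>))"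

definition preserves_finite_sums ::
  "('o1, 'a1) category \<Rightarrow> ('o2, 'a2) category \<Rightarrow> ('o1 \<Rightarrow> 'o2) \<Rightarrow> ('a1 \<Rightarrow> 'a2) \<Rightarrow> bool" where
  "preserves_finite_sums E C FO FA \<longleftrightarrow>
     (\<forall>n X S \<xi>. is_sum E {..<(n::nat)} X S \<xi> \<longrightarrow>
        is_sum C {..<n} (\<lambda>i. FO (X i)) (FO S) (\<lambda>i. FA (\<xi> i)))"

end

theory Submission
  imports Defs
begin

lemma cat_comp: "is_category C \<Longrightarrow> f \<in> hom C A B \<Longrightarrow> g \<in> hom C B D \<Longrightarrow> Comp C g f \<in> hom C A D"
  unfolding is_category_def hom_def by auto

lemma cat_assoc: "is_category C \<Longrightarrow> f \<in> hom C A B \<Longrightarrow> g \<in> hom C B D \<Longrightarrow> h \<in> hom C D K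
  \<Longrightarrow> Comp C h (Comp C g f) = Comp C (Comp C h g) f"
  unfolding is_category_def hom_def by auto

lemma cat_id: "is_category C \<Longrightarrow> A \<in> Obj C \<Longrightarrow> Id C A \<in> hom C A A"
  unfolding is_category_def by auto

lemma cat_idl: "is_category C \<Longrightarrow> f \<in> hom C A B \<Longrightarrow> Comp C (Id C B) f = f"
  unfolding is_category_def hom_def by auto

lemma cat_idr: "is_category C \<Longrightarrow> f \<in> hom C A B \<Longrightarrow> Comp C f (Id C A) = f"
  unfolding is_category_def hom_def by auto

lemma cat_objs: "is_category C \<Longrightarrow> f \<in> hom C A B \<Longrightarrow> A \<in> Obj C \<and> B \<in> Obj C"
  unfolding is_category_def hom_def by auto

lemma fun_hom: "is_functor E C FO FA \<Longrightarrow> f \<in> hom E A B \<Longrightarrow> FA f \<in> hom C (FO A) (FO B)"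
  unfolding is_functor_def hom_def by auto

lemma fun_comp: "is_functor E C FO FA \<Longrightarrow> f \<in> hom E A B \<Longrightarrow> g \<in> hom E B D
  \<Longrightarrow> FA (Comp E g f) = Comp C (FA g) (FA f)"
  unfolding is_functor_def hom_def by auto

lemma fun_id: "is_functor E C FO FA \<Longrightarrow> A \<in> Obj E \<Longrightarrow> FA (Id E A) = Id C (FO A)"
  unfolding is_functor_def by auto

lemma sum_ex:
  assumes "is_sum C I A S \<iota>" "Y \<in> Obj C" "\<forall>i\<in>I. f i \<in> hom C (A i) Y"
  shows "\<exists>u. u \<in> hom C S Y \<and> (\<forall>i\<in>I. Comp C u (\<iota> i) = f i)"
proof -
  have "\<exists>!u. u \<in> hom C S Y \<and> (\<forall>i\<in>I. Comp C u (\<iota> i) = f i)"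
    using assms unfolding is_sum_def by blast
  then show ?thesis by (rule ex1_implies_ex)
qed
lemma sum_cong:
  assumes "is_sum C I A S \<iota>" "\<And>i. i \<in> I \<Longrightarrow> A i = B i"
  shows "is_sum C I B S \<iota>"
  using assms unfolding is_sum_def by (metis (no_types, lifting))

lemma sum_basic:
  assumes "is_sum C I A S \<iota>"
  shows "S \<in> Obj C" "\<And>i. i \<in> I \<Longrightarrow> A i \<in> Obj C" "\<And>i. i \<in> I \<Longrightarrow> \<iota> i \<in> hom C (A i) S"
  using assms unfolding is_sum_def by blast+

lemma sum_uniq:
  assumes "is_category C" "is_sum C I A S \<iota>" "u \<in> hom C S Y" "u' \<in> hom C S Y"
    "\<forall>i\<in>I. Comp C u (\<iota> i) = Comp C u' (\<iota> i)"
  shows "u = u'"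
proof -
  have Y: "Y \<in> Obj C" using cat_objs[OF assms(1) assms(3)] by auto
  have hyp: "\<forall>i\<in>I. Comp C u (\<iota> i) \<in> hom C (A i) Y"
    using sum_basic(3)[OF assms(2)] assms(3) cat_comp[OF assms(1)] by blast
  then have "\<exists>!w. w \<in> hom C S Y \<and> (\<forall>i\<in>I. Comp C w (\<iota> i) = Comp C u (\<iota> i))"
  proof -
    have "\<forall>Y\<in>Obj C. \<forall>f. (\<forall>i\<in>I. f i \<in> hom C (A i) Y) \<longrightarrow>
        (\<exists>!u. u \<in> hom C S Y \<and> (\<forall>i\<in>I. Comp C u (\<iota> i) = f i))"
      using assms(2) unfolding is_sum_def by blast
    from this[rule_format, OF Y, of "\<lambda>i. Comp C u (\<iota> i)"] hyp show ?thesis by blast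
  qed
  then show ?thesis
  proof (rule ex1E)
    fix w assume "\<forall>y. y \<in> hom C S Y \<and> (\<forall>i\<in>I. Comp C y (\<iota> i) = Comp C u (\<iota> i)) \<longrightarrow> y = w"
    then have "u = w" "u' = w" using assms(3,4,5) by auto
    then show ?thesis by simp
  qed
qed

lemma lift_uniq:
  assumes "discrete_fibration E C FO FA" "x \<in> Arr E" "y \<in> Arr E" "Cod E x = Cod E y" "FA x = FA y"
  shows "x = y"
proof -
  have F: "is_functor E C FO FA" using assms(1) unfolding discrete_fibration_def by auto
  have "Cod E x \<in> Obj E" using F assms(2) unfolding is_functor_def is_category_def by auto
  moreover have "FA x \<in> Arr C \<and> Cod C (FA x) = FO (Cod E x)" using F assms(2) unfolding is_functor_def hom_def by auto
  ultimately have "\<exists>!z. z \<in> Arr E \<and> Cod E z = Cod E x \<and> FA z = FA x"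
    using assms(1) unfolding discrete_fibration_def by blast
  then show ?thesis
  proof (rule ex1E)
    fix w assume "\<forall>z. z \<in> Arr E \<and> Cod E z = Cod E x \<and> FA z = FA x \<longrightarrow> z = w"
    then have "x = w" "y = w" using assms by auto
    then show ?thesis by simp
  qed
qed

lemma arr_hom: "f \<in> Arr C \<Longrightarrow> f \<in> hom C (Dom C f) (Cod C f)"
  unfolding hom_def by auto

theorem proposition2p4:
  fixes E :: "('o1, 'a1) category" and C :: "('o2, 'a2) category"
    and FO :: "'o1 \<Rightarrow> 'o2" and FA :: "'a1 \<Rightarrow> 'a2"
    and X :: 'o1 and n :: nat and A :: "nat \<Rightarrow> 'o2" and \<iota> :: "nat \<Rightarrow> 'a2"
  assumes "is_category E" and "is_category C"
    and "has_finite_sums E" and "has_finite_sums C"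
    and "discrete_fibration E C FO FA"
    and "preserves_finite_sums E C FO FA"
    and "X \<in> Obj E"
    and "is_sum C {..<n} A (FO X) \<iota>"
  shows "\<exists>Xs \<xi>. is_sum E {..<n} Xs X \<xi> \<and>
           (\<forall>i < n. FO (Xs i) = A i \<and> FA (\<xi> i) = \<iota> i)"
proof -
  note cE = assms(1) and cC = assms(2) and DF = assms(5) and XO = assms(7) and sumX = assms(8)
  have F: "is_functor E C FO FA" using DF unfolding discrete_fibration_def by auto
  define \<xi> where "\<xi> i = (THE x. x \<in> Arr E \<and> Cod E x = X \<and> FA x = \<iota> i)" for i
  define Xs where "Xs i = Dom E (\<xi> i)" for i
  have io: "\<iota> i \<in> hom C (A i) (FO X)" "A i \<in> Obj C" if "i < n" for i
    using sum_basic[OF sumX] that by auto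
  have xi: "\<xi> i \<in> Arr E \<and> Cod E (\<xi> i) = X \<and> FA (\<xi> i) = \<iota> i" if "i < n" for i
  proof -
    have "\<exists>!x. x \<in> Arr E \<and> Cod E x = X \<and> FA x = \<iota> i"
      using DF XO io[OF that] unfolding discrete_fibration_def hom_def by auto
    then show ?thesis unfolding \<xi>_def by (rule theI')
  qed
  have xih: "\<xi> i \<in> hom E (Xs i) X" if "i < n" for i
    using xi[OF that] unfolding Xs_def hom_def by auto
  have FXs: "FO (Xs i) = A i" if "i < n" for i
    using fun_hom[OF F xih[OF that]] xi[OF that] io[OF that] unfolding hom_def by auto
  have XsO: "Xs i \<in> Obj E" if "i < n" for i using cat_objs[OF cE xih[OF that]] by auto
  obtain S \<sigma> where sumS: "is_sum E {..<n} Xs S \<sigma>"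
    using assms(3) XsO unfolding has_finite_sums_def by blast
  have SO: "S \<in> Obj E" and sig: "\<And>i. i < n \<Longrightarrow> \<sigma> i \<in> hom E (Xs i) S"
    using sum_basic[OF sumS] by auto
  obtain u where u: "u \<in> hom E S X" and usig: "\<And>i. i < n \<Longrightarrow> Comp E u (\<sigma> i) = \<xi> i"
    using sum_ex[OF sumS XO, of \<xi>] xih by auto
  have sumFS0: "is_sum C {..<n} (\<lambda>i. FO (Xs i)) (FO S) (\<lambda>i. FA (\<sigma> i))"
    using assms(6) sumS unfolding preserves_finite_sums_def by blast
  have sumFS: "is_sum C {..<n} A (FO S) (\<lambda>i. FA (\<sigma> i))"
    using sum_cong[OF sumFS0] FXs by auto
  have FSO: "FO S \<in> Obj C" using sum_basic[OF sumFS] by auto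
  have FXO: "FO X \<in> Obj C" using sum_basic[OF sumX] by auto
  have Fsig: "FA (\<sigma> i) \<in> hom C (A i) (FO S)" if "i < n" for i
    using fun_hom[OF F sig[OF that]] FXs[OF that] by simp
  obtain v where v: "v \<in> hom C (FO X) (FO S)" and viota: "\<And>i. i < n \<Longrightarrow> Comp C v (\<iota> i) = FA (\<sigma> i)"
    using sum_ex[OF sumX FSO, of "\<lambda>i. FA (\<sigma> i)"] Fsig by auto
  have Fu: "FA u \<in> hom C (FO S) (FO X)" using fun_hom[OF F u] .
  have Fusig: "Comp C (FA u) (FA (\<sigma> i)) = \<iota> i" if "i < n" for i
    using fun_comp[OF F sig[OF that] u] usig[OF that] xi[OF that] by simp
  have vu: "Comp C v (FA u) = Id C (FO S)"
  proof (rule sum_uniq[OF cC sumFS cat_comp[OF cC Fu v] cat_id[OF cC FSO]], intro ballI)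
    fix i assume "i \<in> {..<n}" then have i: "i < n" by simp
    have "Comp C (Comp C v (FA u)) (FA (\<sigma> i)) = Comp C v (Comp C (FA u) (FA (\<sigma> i)))"
      using cat_assoc[OF cC Fsig[OF i] Fu v] by simp
    also have "\<dots> = FA (\<sigma> i)" using Fusig[OF i] viota[OF i] by simp
    also have "\<dots> = Comp C (Id C (FO S)) (FA (\<sigma> i))" using cat_idl[OF cC Fsig[OF i]] by simp
    finally show "Comp C (Comp C v (FA u)) (FA (\<sigma> i)) = Comp C (Id C (FO S)) (FA (\<sigma> i))" .
  qed
  have uv: "Comp C (FA u) v = Id C (FO X)"
  proof (rule sum_uniq[OF cC sumX cat_comp[OF cC v Fu] cat_id[OF cC FXO]], intro ballI)
    fix i assume "i \<in> {..<n}" then have i: "i < n" by simp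
    have "Comp C (Comp C (FA u) v) (\<iota> i) = Comp C (FA u) (Comp C v (\<iota> i))"
      using cat_assoc[OF cC io(1)[OF i] v Fu] by simp
    also have "\<dots> = \<iota> i" using Fusig[OF i] viota[OF i] by simp
    also have "\<dots> = Comp C (Id C (FO X)) (\<iota> i)" using cat_idl[OF cC io(1)[OF i]] by simp
    finally show "Comp C (Comp C (FA u) v) (\<iota> i) = Comp C (Id C (FO X)) (\<iota> i)" .
  qed
  obtain vh where vh: "vh \<in> Arr E" "Cod E vh = S" "FA vh = v"
    using DF SO v unfolding discrete_fibration_def hom_def by blast
  have vhh0: "vh \<in> hom E (Dom E vh) S" using vh unfolding hom_def by auto
  have uvh: "Comp E u vh = Id E X"
  proof (rule lift_uniq[OF DF])
    show "Comp E u vh \<in> Arr E" using cat_comp[OF cE vhh0 u] unfolding hom_def by auto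
    show "Id E X \<in> Arr E" using cat_id[OF cE XO] unfolding hom_def by auto
    show "Cod E (Comp E u vh) = Cod E (Id E X)"
      using cat_comp[OF cE vhh0 u] cat_id[OF cE XO] unfolding hom_def by auto
    show "FA (Comp E u vh) = FA (Id E X)"
      using fun_comp[OF F vhh0 u] vh uv fun_id[OF F XO] by simp
  qed
  have vhh: "vh \<in> hom E X S"
  proof -
    have "Dom E (Comp E u vh) = Dom E vh" using cat_comp[OF cE vhh0 u] unfolding hom_def by auto
    moreover have "Dom E (Id E X) = X" using cat_id[OF cE XO] unfolding hom_def by auto
    ultimately show ?thesis using uvh vhh0 by simp
  qed
  have vhu: "Comp E vh u = Id E S"
  proof (rule lift_uniq[OF DF])
    show "Comp E vh u \<in> Arr E" using cat_comp[OF cE u vhh] unfolding hom_def by auto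
    show "Id E S \<in> Arr E" using cat_id[OF cE SO] unfolding hom_def by auto
    show "Cod E (Comp E vh u) = Cod E (Id E S)"
      using cat_comp[OF cE u vhh] cat_id[OF cE SO] unfolding hom_def by auto
    show "FA (Comp E vh u) = FA (Id E S)"
      using fun_comp[OF F u vhh] vh vu fun_id[OF F SO] by simp
  qed
  have "is_sum E {..<n} Xs X \<xi>"
    unfolding is_sum_def
  proof (intro conjI ballI allI impI)
    show "X \<in> Obj E" by (rule XO)
    fix i assume "i \<in> {..<n}" then show "Xs i \<in> Obj E" "\<xi> i \<in> hom E (Xs i) X"
      using XsO xih by auto
  next
    fix Y f assume Y: "Y \<in> Obj E" and f: "\<forall>i\<in>{..<n}. f i \<in> hom E (Xs i) Y"
    obtain w where w: "w \<in> hom E S Y" and wsig: "\<forall>i\<in>{..<n}. Comp E w (\<sigma> i) = f i"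
      using sum_ex[OF sumS Y f] by blast
    have wvh: "Comp E w vh \<in> hom E X Y" using cat_comp[OF cE vhh w] .
    have ex: "\<forall>i\<in>{..<n}. Comp E (Comp E w vh) (\<xi> i) = f i"
    proof
      fix i assume "i \<in> {..<n}" then have i: "i < n" by simp
      have "Comp E (Comp E w vh) (\<xi> i) = Comp E w (Comp E vh (\<xi> i))"
        using cat_assoc[OF cE xih[OF i] vhh w] by simp
      also have "Comp E vh (\<xi> i) = Comp E vh (Comp E u (\<sigma> i))" using usig[OF i] by simp
      also have "\<dots> = Comp E (Comp E vh u) (\<sigma> i)" using cat_assoc[OF cE sig[OF i] u vhh] .
      also have "\<dots> = \<sigma> i" using vhu cat_idl[OF cE sig[OF i]] by simp
      finally show "Comp E (Comp E w vh) (\<xi> i) = f i" using wsig i by simp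
    qed
    show "\<exists>!t. t \<in> hom E X Y \<and> (\<forall>i\<in>{..<n}. Comp E t (\<xi> i) = f i)"
    proof (rule ex1I[of _ "Comp E w vh"])
      show "Comp E w vh \<in> hom E X Y \<and> (\<forall>i\<in>{..<n}. Comp E (Comp E w vh) (\<xi> i) = f i)"
        using wvh ex by simp
    next
      fix t assume t: "t \<in> hom E X Y \<and> (\<forall>i\<in>{..<n}. Comp E t (\<xi> i) = f i)"
      have tuh: "Comp E t u \<in> hom E S Y" using cat_comp[OF cE u] t by blast
      have tu: "Comp E t u = w"
      proof (rule sum_uniq[OF cE sumS tuh w], intro ballI)
        fix i assume "i \<in> {..<n}" then have i: "i < n" by simp
        have "Comp E (Comp E t u) (\<sigma> i) = Comp E t (Comp E u (\<sigma> i))"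
          using cat_assoc[OF cE sig[OF i] u, of t Y] t by simp
        then show "Comp E (Comp E t u) (\<sigma> i) = Comp E w (\<sigma> i)"
          using usig[OF i] t wsig i by simp
      qed
      have "t = Comp E t (Id E X)" using cat_idr[OF cE] t by metis
      also have "\<dots> = Comp E t (Comp E u vh)" using uvh by simp
      also have "\<dots> = Comp E (Comp E t u) vh" using cat_assoc[OF cE vhh u, of t Y] t by simp
      finally show "t = Comp E w vh" using tu by simp
    qed
  qed
  then show ?thesis using FXs xi by blast
qed

end
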